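(* In the multi-hop VAoI network described in the context, the VAoI at the destination node $N+1$ satisfies \[ \Delta_{N+1}(t)=\Delta_1(t-\tau_N)+\beta_N, \] where $\tau_N=\sum_{i=1}^N m_i$ and $\beta_N=\sum_{i=1}^N\eta_{m_i}$, with $m_i$ independent geometric random variables with parameters $\rho_i$ ($\mathbb{P}(m_i=\ell)=(1-\rho_i)^{\ell-1}\rho_i$, $\ell\ge1$) and $\eta_{m_i}$ conditionally on $m_i$ binomial with parameters $m_i$ and $p_g$ (the number of source versions generated during those $m_i$ slots). Moreover $\mathbb{E}[\tau_N]=\sum_{i=1}^N\frac1{\rho_i}$ and $\mathbb{E}[\beta_N]=p_g\sum_{i=1}^N\frac1{\rho_i}$.
   Context: Time is slotted. A source generates a new version in each slot independently with probability $p_g$, and its version index $V_S(t)$ increases by one at the start of the slot following each generation. Nodes $0,1,\dots,N+1$ form a line; node $0$ always holds the current source version ($V_0(t)=V_S(t)$), node $N+1$ is the destination, and nodes $1,\dots,N$ are relays. Each node stores only the latest version it has received. Link $i$ (from node $i$ to node $i+1$) delivers a transmission successfully with probability $\rho_i$, independently across slots and links ($\rho_0=p_s$). Node $0$ transmits according to an update policy; each relay node $i\ge1$ transmits its stored version in every slot, so that $V_{i+1}(t+1)=V_i(t)$ if the transmission on link $i$ at slot $t$ succeeds and $V_{i+1}(t+1)=V_{i+1}(t)$ otherwise. The VAoI at node $j$ is $\Delta_j(t)=V_S(t)-V_j(t)$. The random variable $m_i$ is the number of slots back to the last successful delivery on link $i$ (the relaying delay over link $i$). *)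

theory Defs
  imports "HOL-Probability.Probability"
begin

text \<open>Slotted time is the set of integers (stationary regime). S i s w: transmission on
link i (node i to node i+1) in slot s succeeds. G s w: the source generates a new version in slot s.\<close>

definition link_delay :: "(nat \<Rightarrow> int \<Rightarrow> 'a \<Rightarrow> bool) \<Rightarrow> nat \<Rightarrow> int \<Rightarrow> 'a \<Rightarrow> nat" where
  "link_delay S i s w = (LEAST l::nat. 1 \<le> l \<and> S i (s - int l) w)"

text \<open>back_time S N t k w: the time at node N+1-k from which the version held by the
destination at time t originates (tracing back k hops).\<close>
fun back_time :: "(nat \<Rightarrow> int \<Rightarrow> 'a \<Rightarrow> bool) \<Rightarrow> nat \<Rightarrow> int \<Rightarrow> nat \<Rightarrow> 'a \<Rightarrow> int" where
  "back_time S N t 0 w = t"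
| "back_time S N t (Suc k) w = back_time S N t k w - int (link_delay S (N - k) (back_time S N t k w) w)"

text \<open>m_i: relaying delay over link i along the path of the version held at node N+1 at time t.\<close>
definition hop_delay :: "(nat \<Rightarrow> int \<Rightarrow> 'a \<Rightarrow> bool) \<Rightarrow> nat \<Rightarrow> int \<Rightarrow> nat \<Rightarrow> 'a \<Rightarrow> nat" where
  "hop_delay S N t i w = link_delay S i (back_time S N t (N - i) w) w"

definition hop_gen :: "(int \<Rightarrow> 'a \<Rightarrow> bool) \<Rightarrow> (nat \<Rightarrow> int \<Rightarrow> 'a \<Rightarrow> bool) \<Rightarrow> nat \<Rightarrow> int \<Rightarrow> nat \<Rightarrow> 'a \<Rightarrow> nat" where
  "hop_gen G S N t i w = card {l \<in> {1..hop_delay S N t i w}. G (back_time S N t (N - i) w - int l) w}"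

definition tauN :: "(nat \<Rightarrow> int \<Rightarrow> 'a \<Rightarrow> bool) \<Rightarrow> nat \<Rightarrow> int \<Rightarrow> 'a \<Rightarrow> nat" where
  "tauN S N t w = (\<Sum>i=1..N. hop_delay S N t i w)"

definition betaN :: "(int \<Rightarrow> 'a \<Rightarrow> bool) \<Rightarrow> (nat \<Rightarrow> int \<Rightarrow> 'a \<Rightarrow> bool) \<Rightarrow> nat \<Rightarrow> int \<Rightarrow> 'a \<Rightarrow> nat" where
  "betaN G S N t w = (\<Sum>i=1..N. hop_gen G S N t i w)"

text \<open>VAoI at node j: Delta_j(t) = V_S(t) - V_j(t), with V 0 = V_S.\<close>
definition vaoi :: "(nat \<Rightarrow> int \<Rightarrow> 'a \<Rightarrow> int) \<Rightarrow> nat \<Rightarrow> int \<Rightarrow> 'a \<Rightarrow> int" where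
  "vaoi V j s w = V 0 s w - V j s w"

end

theory Submission
  imports Defs
begin


lemma ld_cong:
  assumes "\<And>s. S i s w = S' i s w'"
  shows "link_delay S i c w = link_delay S' i c w'"
  unfolding link_delay_def using assms by simp

lemma bt_cong:
  assumes "\<And>j s. j < k \<Longrightarrow> S (N - j) s w = S' (N - j) s w'"
  shows "back_time S N t k w = back_time S' N t k w'"
  using assms
proof (induction k)
  case 0 then show ?case by simp
next
  case (Suc k)
  have IH: "back_time S N t k w = back_time S' N t k w'" using Suc by auto
  have "link_delay S (N - k) (back_time S N t k w) w = link_delay S' (N - k) (back_time S N t k w) w'"
    by (rule ld_cong) (use Suc.prems in auto)
  then show ?case using IH by simp
qed

lemma bt_shift:
  "back_time S (Suc n) t (Suc k) w = back_time S n (t - int (link_delay S (Suc n) t w)) k w"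
proof (induction k)
  case 0 then show ?case by simp
next
  case (Suc k)
  have "back_time S (Suc n) t (Suc (Suc k)) w
     = back_time S (Suc n) t (Suc k) w - int (link_delay S (n - k) (back_time S (Suc n) t (Suc k) w) w)"
    by simp
  also have "\<dots> = back_time S n (t - int (link_delay S (Suc n) t w)) (Suc k) w"
    using Suc by simp
  finally show ?case .
qed

lemma hd_shift:
  assumes "i \<in> {1..n}"
  shows "hop_delay S (Suc n) t i w = hop_delay S n (t - int (link_delay S (Suc n) t w)) i w"
proof -
  have "Suc n - i = Suc (n - i)" using assms by auto
  then show ?thesis unfolding hop_delay_def by (simp only: bt_shift)
qed

lemma hd_top: "hop_delay S (Suc n) t (Suc n) w = link_delay S (Suc n) t w"
  unfolding hop_delay_def by simp

lemma ld_meas: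
  assumes "\<And>s. Measurable.pred \<Omega> (S i s)"
  shows "link_delay S i c \<in> measurable \<Omega> (count_space UNIV)"
  unfolding link_delay_def
  by (rule measurable_Least) (use assms in measurable)

lemma bt_meas:
  assumes "\<And>j s. j < k \<Longrightarrow> Measurable.pred \<Omega> (S (N - j) s)"
  shows "back_time S N t k \<in> measurable \<Omega> (count_space UNIV)"
  using assms
proof (induction k)
  case 0 then show ?case by simp
next
  case (Suc k)
  have m: "back_time S N t k \<in> measurable \<Omega> (count_space UNIV)" using Suc by auto
  have "(\<lambda>x. (\<lambda>c x. c - int (link_delay S (N - k) c x)) (back_time S N t k x) x) \<in> measurable \<Omega> (count_space UNIV)"
  proof (rule measurable_compose_countable[OF _ m])
    fix c :: int
    have ldm: "link_delay S (N - k) c \<in> measurable \<Omega> (count_space UNIV)"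
      by (rule ld_meas) (use Suc.prems in auto)
    show "(\<lambda>x. c - int (link_delay S (N - k) c x)) \<in> measurable \<Omega> (count_space UNIV)"
      using measurable_compose[OF ldm, of "\<lambda>n. c - int n" "count_space UNIV"] by simp
  qed
  then show ?case by simp
qed


lemma ld_prop:
  assumes "\<exists>l\<ge>1. S i (c - int l) w"
  shows "1 \<le> link_delay S i c w" "S i (c - int (link_delay S i c w)) w"
    "\<And>j. 1 \<le> j \<Longrightarrow> j < link_delay S i c w \<Longrightarrow> \<not> S i (c - int j) w"
proof -
  have *: "1 \<le> link_delay S i c w \<and> S i (c - int (link_delay S i c w)) w"
    unfolding link_delay_def by (rule LeastI_ex) (use assms in auto)
  then show "1 \<le> link_delay S i c w" "S i (c - int (link_delay S i c w)) w" by auto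
  fix j assume "1 \<le> j" "j < link_delay S i c w"
  then show "\<not> S i (c - int j) w"
    unfolding link_delay_def using not_less_Least by blast
qed

lemma relay_step:
  assumes rel: "\<And>s. V (Suc i) (s + 1) w = (if S i s w then V i s w else V (Suc i) s w)"
    and ex: "\<exists>l\<ge>1. S i (c - int l) w"
  shows "V (Suc i) c w = V i (c - int (link_delay S i c w)) w"
proof -
  let ?L = "link_delay S i c w"
  note P = ld_prop[of S i c w, OF ex]
  have D: "d < ?L \<Longrightarrow> V (Suc i) c w = V (Suc i) (c - int d) w" for d
  proof (induction d)
    case 0 then show ?case by simp
  next
    case (Suc d)
    have e: "(c - int (Suc d)) + 1 = c - int d" by simp
    have r: "V (Suc i) (c - int d) w = (if S i (c - int (Suc d)) w then V i (c - int (Suc d)) w else V (Suc i) (c - int (Suc d)) w)"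
      using rel[of "c - int (Suc d)"] unfolding e .
    have "\<not> S i (c - int (Suc d)) w" using P(3)[of "Suc d"] Suc.prems by auto
    then have "V (Suc i) (c - int d) w = V (Suc i) (c - int (Suc d)) w"
      using r by simp
    then show ?case using Suc by simp
  qed
  have "V (Suc i) c w = V (Suc i) (c - int (?L - 1)) w" using D[of "?L - 1"] P(1) by simp
  also have "c - int (?L - 1) = (c - int ?L) + 1" using P(1) by simp
  also have "V (Suc i) (c - int ?L + 1) w = V i (c - int ?L) w"
    using rel[of "c - int ?L"] P(2) by (simp only: if_True)
  finally show ?thesis .
qed

lemma filter_insert_eq: "{j \<in> insert a A. P j} = (if P a then insert a {j \<in> A. P j} else {j \<in> A. P j})"
  by auto

lemma card_step:
  "card {j \<in> {1..Suc l}. P j} = card {j \<in> {1..l}. P j} + (if P (Suc l) then 1 else 0)"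
proof -
  have e: "{1..Suc l} = insert (Suc l) {1..l}" by (auto simp add: atLeastAtMostSuc_conv)
  have f: "finite {j \<in> {1..l}. P j}" by simp
  have n: "Suc l \<notin> {j \<in> {1..l}. P j}" by simp
  show ?thesis unfolding e filter_insert_eq using card_insert_disjoint[OF f n] by simp
qed

lemma source_cnt:
  fixes f :: "int \<Rightarrow> int"
  assumes src: "\<And>s. f (s + 1) = f s + (if g s then 1 else 0)"
  shows "f c - f (c - int l) = int (card {j \<in> {1..l}. g (c - int j)})"
proof (induction l)
  case 0 then show ?case by simp
next
  case (Suc l)
  have e: "(c - int (Suc l)) + 1 = c - int l" by simp
  have st: "f (c - int l) = f (c - int (Suc l)) + (if g (c - int (Suc l)) then 1 else 0)"
    using src[of "c - int (Suc l)"] unfolding e .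
  note cs = card_step[where P="\<lambda>j. g (c - int j)" and l=l]
  show ?case using Suc.IH st cs
    by (cases "g (c - int (Suc l))")
       (simp_all only: if_True if_False of_nat_add of_nat_1 of_nat_0 add_0_right; linarith)+
qed

lemma det:
  assumes good: "\<And>i c. i \<in> {1..N} \<Longrightarrow> \<exists>l\<ge>1. S i (c - int l) w"
    and src: "\<And>s. V 0 (s + 1) w = V 0 s w + (if G s w then 1 else 0)"
    and rel: "\<And>i s. i \<in> {1..N} \<Longrightarrow> V (Suc i) (s + 1) w = (if S i s w then V i s w else V (Suc i) s w)"
  shows "vaoi V (N + 1) t w = vaoi V 1 (t - int (tauN S N t w)) w + int (betaN G S N t w)"
proof -
  let ?b = "\<lambda>k. back_time S N t k w"
  let ?ld = "\<lambda>j. link_delay S (N - j) (?b j) w"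
  let ?hg = "\<lambda>j. card {l \<in> {1..?ld j}. G (?b j - int l) w}"
  have C: "?b k = t - int (\<Sum>j<k. ?ld j)" for k
    by (induction k) auto
  have AB: "k \<le> N \<Longrightarrow> V (N + 1 - k) (?b k) w = V (N + 1) t w \<and> V 0 t w - V 0 (?b k) w = int (\<Sum>j<k. ?hg j)" for k
  proof (induction k)
    case 0 then show ?case by simp
  next
    case (Suc k)
    then have IH: "V (N + 1 - k) (?b k) w = V (N + 1) t w" "V 0 t w - V 0 (?b k) w = int (\<Sum>j<k. ?hg j)"
      by auto
    have i: "N - k \<in> {1..N}" using Suc.prems by auto
    have e1: "N + 1 - k = Suc (N - k)" using Suc.prems by auto
    have "V (Suc (N - k)) (?b k) w = V (N - k) (?b k - int (?ld k)) w"
      by (rule relay_step[where S=S]) (use rel[OF i] good[OF i] in auto)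
    then have a: "V (N + 1 - Suc k) (?b (Suc k)) w = V (N + 1) t w"
      using IH(1) e1 by simp
    have "V 0 (?b k) w - V 0 (?b k - int (?ld k)) w = int (?hg k)"
      by (rule source_cnt[where g="\<lambda>s. G s w"]) (use src in auto)
    then have b: "V 0 t w - V 0 (?b (Suc k)) w = int (\<Sum>j<Suc k. ?hg j)"
      using IH(2) by simp
    show ?case using a b by blast
  qed
  have reidx: "(\<Sum>i=1..N. f i) = (\<Sum>j<N. f (N - j))" for f :: "nat \<Rightarrow> nat"
    by (rule sum.reindex_bij_witness[of _ "\<lambda>i. N - i" "\<lambda>j. N - j"]) auto
  have tau: "tauN S N t w = (\<Sum>j<N. ?ld j)"
    unfolding tauN_def hop_delay_def by (subst reidx) (auto intro!: sum.cong)
  have beta: "betaN G S N t w = (\<Sum>j<N. ?hg j)"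
    unfolding betaN_def hop_gen_def hop_delay_def by (subst reidx) (auto intro!: sum.cong)
  have bN: "?b N = t - int (tauN S N t w)" using C[of N] tau by simp
  show ?thesis using AB[of N] bN beta unfolding vaoi_def by simp
qed


definition Sx :: "nat \<Rightarrow> int \<Rightarrow> (int + nat \<times> int \<Rightarrow> bool) \<Rightarrow> bool" where
  "Sx i s x = x (Inr (i, s))"

definition Gx :: "int \<Rightarrow> (int + nat \<times> int \<Rightarrow> bool) \<Rightarrow> bool" where
  "Gx s x = x (Inl s)"

lemma Sx_pred: "Inr (i, s) \<in> A \<Longrightarrow> Measurable.pred (PiM A (\<lambda>_. count_space UNIV)) (Sx i s)"
  unfolding Sx_def using measurable_component_singleton[of "Inr (i, s)" A "\<lambda>_. count_space UNIV"] by simp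

lemma Gx_pred: "Inl s \<in> A \<Longrightarrow> Measurable.pred (PiM A (\<lambda>_. count_space UNIV)) (Gx s)"
  unfolding Gx_def using measurable_component_singleton[of "Inl s" A "\<lambda>_. count_space UNIV"] by simp

lemma ld_pm: "(\<And>s. Inr (i, s) \<in> A) \<Longrightarrow> link_delay Sx i c \<in> measurable (PiM A (\<lambda>_. count_space UNIV)) (count_space UNIV)"
  by (rule ld_meas) (rule Sx_pred)

lemma bt_pm: "(\<And>j s. j < k \<Longrightarrow> Inr (n - j, s) \<in> A) \<Longrightarrow> back_time Sx n t k \<in> measurable (PiM A (\<lambda>_. count_space UNIV)) (count_space UNIV)"
  by (rule bt_meas) (rule Sx_pred)

lemma hd_meas_gen:
  assumes "\<And>s. Measurable.pred \<Omega> (S i s)" "\<And>j s. j < n - i \<Longrightarrow> Measurable.pred \<Omega> (S (n - j) s)"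
  shows "hop_delay S n t i \<in> measurable \<Omega> (count_space UNIV)"
proof -
  have b: "back_time S n t (n - i) \<in> measurable \<Omega> (count_space UNIV)" by (rule bt_meas) (rule assms(2))
  have "(\<lambda>w. (\<lambda>c. link_delay S i c) (back_time S n t (n - i) w) w) \<in> measurable \<Omega> (count_space UNIV)"
    by (rule measurable_compose_countable[OF _ b]) (rule ld_meas, rule assms(1))
  then show ?thesis unfolding hop_delay_def by simp
qed


locale vsetup = prob_space M for M :: "'a measure" +
  fixes G :: "int \<Rightarrow> 'a \<Rightarrow> bool" and S :: "nat \<Rightarrow> int \<Rightarrow> 'a \<Rightarrow> bool" and N :: nat
    and pg :: real and \<rho> :: "nat \<Rightarrow> real"
  assumes pg: "0 \<le> pg" "pg \<le> 1"
    and rho: "\<And>i. i \<in> {1..N} \<Longrightarrow> 0 < \<rho> i \<and> \<rho> i \<le> 1"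
    and indep: "indep_vars (\<lambda>_. count_space UNIV) (case_sum G (case_prod S))
                  (range Inl \<union> Inr ` ({1..N} \<times> UNIV))"
    and gen: "\<And>s. measure M {w \<in> space M. G s w} = pg"
    and succ: "\<And>i s. i \<in> {1..N} \<Longrightarrow> measure M {w \<in> space M. S i s w} = \<rho> i"
begin

abbreviation "X \<equiv> case_sum G (case_prod S)"
abbreviation "JJ \<equiv> range Inl \<union> Inr ` ({1..N} \<times> (UNIV :: int set))"

lemma X_rv: "j \<in> JJ \<Longrightarrow> X j \<in> measurable M (count_space UNIV)"
  using indep unfolding indep_vars_def by auto

lemma S_pred: "i \<in> {1..N} \<Longrightarrow> Measurable.pred M (S i s)"
  using X_rv[of "Inr (i, s)"] by simp

lemma G_pred: "Measurable.pred M (G s)"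
  using X_rv[of "Inl s"] by simp

lemma indep_fin:
  assumes K: "finite K" "K \<noteq> {}" "inj_on h K" "h ` K \<subseteq> JJ"
  shows "prob {w \<in> space M. \<forall>j\<in>K. X (h j) w = b j} = (\<Prod>j\<in>K. prob {w \<in> space M. X (h j) w = b j})"
proof -
  let ?A = "\<lambda>x. {b (inv_into K h x)}"
  have "prob (\<Inter>x\<in>h ` K. X x -` ?A x \<inter> space M) = (\<Prod>x\<in>h ` K. prob (X x -` ?A x \<inter> space M))"
    by (rule indep_varsD[OF indep]) (use K in auto)
  also have "\<dots> = (\<Prod>j\<in>K. prob (X (h j) -` ?A (h j) \<inter> space M))"
    using K(3) by (simp add: prod.reindex)
  also have "\<dots> = (\<Prod>j\<in>K. prob {w \<in> space M. X (h j) w = b j})"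
    using K(3) by (intro prod.cong refl arg_cong[where f=prob]) auto
  also have "(\<Inter>x\<in>h ` K. X x -` ?A x \<inter> space M) = {w \<in> space M. \<forall>j\<in>K. X (h j) w = b j}"
    using K(2,3) by auto
  finally show ?thesis .
qed

lemma probS: "i \<in> {1..N} \<Longrightarrow> prob {w \<in> space M. S i s w = b} = (if b then \<rho> i else 1 - \<rho> i)"
proof -
  assume i: "i \<in> {1..N}"
  note [measurable] = S_pred[OF i]
  show ?thesis
  proof (cases b)
    case True then show ?thesis using succ[OF i] by simp
  next
    case False
    have "{w \<in> space M. S i s w = b} = space M - {w \<in> space M. S i s w}" using False by auto
    then show ?thesis using prob_compl[of "{w \<in> space M. S i s w}"] succ[OF i] False by simp
  qed
qed

lemma probG: "prob {w \<in> space M. G s w = b} = (if b then pg else 1 - pg)"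
proof -
  note [measurable] = G_pred
  show ?thesis
  proof (cases b)
    case True then show ?thesis using gen by simp
  next
    case False
    have "{w \<in> space M. G s w = b} = space M - {w \<in> space M. G s w}" using False by auto
    then show ?thesis using prob_compl[of "{w \<in> space M. G s w}"] gen False by simp
  qed
qed

lemma link_pattern:
  assumes i: "i \<in> {1..N}"
  shows "prob {w \<in> space M. \<forall>j\<in>{1..l}. S i (c - int j) w = b j} = (\<Prod>j\<in>{1..l}. if b j then \<rho> i else 1 - \<rho> i)"
proof (cases "l = 0")
  case True then show ?thesis by (simp add: prob_space)
next
  case False
  have "prob {w \<in> space M. \<forall>j\<in>{1..l}. X ((\<lambda>j. Inr (i, c - int j)) j) w = b j}
     = (\<Prod>j\<in>{1..l}. prob {w \<in> space M. X ((\<lambda>j. Inr (i, c - int j)) j) w = b j})"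
    by (rule indep_fin) (use False i in \<open>auto simp: inj_on_def\<close>)
  then show ?thesis using probS[OF i] by simp
qed

lemma G_pattern:
  shows "prob {w \<in> space M. \<forall>j\<in>{1..l}. G (c - int j) w = b j} = (\<Prod>j\<in>{1..l}. if b j then pg else 1 - pg)"
proof (cases "l = 0")
  case True then show ?thesis by (simp add: prob_space)
next
  case False
  have "prob {w \<in> space M. \<forall>j\<in>{1..l}. X ((\<lambda>j. Inl (c - int j)) j) w = b j}
     = (\<Prod>j\<in>{1..l}. prob {w \<in> space M. X ((\<lambda>j. Inl (c - int j)) j) w = b j})"
    by (rule indep_fin) (use False in \<open>auto simp: inj_on_def\<close>)
  then show ?thesis using probG by simp
qed

lemma Z_zero:
  assumes i: "i \<in> {1..N}"
  shows "prob {w \<in> space M. \<forall>j\<ge>(1::nat). \<not> S i (c - int j) w} = 0"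
proof -
  note [measurable] = S_pred[OF i]
  let ?Z = "{w \<in> space M. \<forall>j\<ge>(1::nat). \<not> S i (c - int j) w}"
  have Zs: "?Z \<in> sets M" by measurable
  have bound: "prob ?Z \<le> (1 - \<rho> i) ^ n" for n
  proof -
    have "prob ?Z \<le> prob {w \<in> space M. \<forall>j\<in>{1..n}. S i (c - int j) w = False}"
      by (rule finite_measure_mono) auto
    also have "\<dots> = (\<Prod>j\<in>{1..n}. if False then \<rho> i else 1 - \<rho> i)"
      by (rule link_pattern[OF i])
    also have "\<dots> = (1 - \<rho> i) ^ n" by simp
    finally show ?thesis .
  qed
  show ?thesis
  proof (rule ccontr)
    assume "prob ?Z \<noteq> 0"
    then have "prob ?Z > 0" using measure_nonneg[of M ?Z] by linarith
    moreover have "1 - \<rho> i < 1" using rho[OF i] by simp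
    ultimately obtain n where "(1 - \<rho> i) ^ n < prob ?Z" using real_arch_pow_inv by blast
    then show False using bound[of n] by simp
  qed
qed

lemma AE_good:
  assumes i: "i \<in> {1..N}"
  shows "AE w in M. \<exists>j\<ge>(1::nat). S i (c - int j) w"
proof -
  note [measurable] = S_pred[OF i]
  let ?Z = "{w \<in> space M. \<forall>j\<ge>(1::nat). \<not> S i (c - int j) w}"
  have Zs: "?Z \<in> sets M" by measurable
  have "?Z \<in> null_sets M" using Zs Z_zero[OF i, of c] by (simp add: emeasure_eq_measure null_sets_def)
  then show ?thesis by (rule AE_I') auto
qed

lemma ld_eq_first:
  assumes ex: "\<exists>j\<ge>(1::nat). S i (c - int j) w"
  shows "link_delay S i c w = l \<longleftrightarrow> (l \<noteq> 0 \<and> (\<forall>j\<in>{1..l}. S i (c - int j) w = (j = l)))"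
proof
  note P = ld_prop[of S i c w, OF ex]
  assume "link_delay S i c w = l"
  then show "l \<noteq> 0 \<and> (\<forall>j\<in>{1..l}. S i (c - int j) w = (j = l))"
    using P by (metis atLeastAtMost_iff le_neq_implies_less not_one_le_zero)
next
  note P = ld_prop[of S i c w, OF ex]
  assume a: "l \<noteq> 0 \<and> (\<forall>j\<in>{1..l}. S i (c - int j) w = (j = l))"
  have le: "link_delay S i c w \<le> l"
    unfolding link_delay_def by (rule Least_le) (use a in auto)
  show "link_delay S i c w = l"
  proof (rule ccontr)
    assume "link_delay S i c w \<noteq> l"
    then have "link_delay S i c w < l" using le by simp
    then have "\<not> S i (c - int (link_delay S i c w)) w" using a P(1) by auto
    then show False using P(2) by simp
  qed
qed

lemma geo:
  assumes i: "i \<in> {1..N}"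
  shows "prob {w \<in> space M. link_delay S i c w = l} = (if l = 0 then 0 else (1 - \<rho> i) ^ (l - 1) * \<rho> i)"
proof -
  note [measurable] = S_pred[OF i]
  have ldm[measurable]: "link_delay S i c \<in> measurable M (count_space UNIV)"
    by (rule ld_meas) (rule S_pred[OF i])
  let ?B = "{w \<in> space M. l \<noteq> 0 \<and> (\<forall>j\<in>{1..l}. S i (c - int j) w = (j = l))}"
  have "prob {w \<in> space M. link_delay S i c w = l} = prob ?B"
  proof (rule finite_measure_eq_AE)
    show "AE x in M. (x \<in> {w \<in> space M. link_delay S i c w = l}) = (x \<in> ?B)"
      using AE_good[OF i, of c] by eventually_elim (use ld_eq_first in auto)
  qed measurable
  also have "\<dots> = (if l = 0 then 0 else (1 - \<rho> i) ^ (l - 1) * \<rho> i)"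
  proof (cases l)
    case 0 then show ?thesis by simp
  next
    case (Suc m)
    have "prob ?B = prob {w \<in> space M. \<forall>j\<in>{1..l}. S i (c - int j) w = (j = l)}"
      using Suc by simp
    also have "\<dots> = (\<Prod>j\<in>{1..l}. if j = l then \<rho> i else 1 - \<rho> i)"
      by (rule link_pattern[OF i])
    also have "\<dots> = (1 - \<rho> i) ^ m * \<rho> i"
    proof -
      have e: "{1..l} = insert (Suc m) {1..m}" using Suc by (auto simp: atLeastAtMostSuc_conv)
      have "(\<Prod>j\<in>{1..m}. if j = Suc m then \<rho> i else 1 - \<rho> i) = (\<Prod>j\<in>{1..m}. 1 - \<rho> i)"
        by (rule prod.cong) auto
      then show ?thesis unfolding e using Suc by simp
    qed
    finally show ?thesis using Suc by simp
  qed
  finally show ?thesis .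
qed

lemma binom:
  "prob {w \<in> space M. card {j \<in> {1..l}. G (c - int j) w} = k} = real (l choose k) * pg ^ k * (1 - pg) ^ (l - k)"
proof -
  note [measurable] = G_pred
  let ?BB = "{B. B \<subseteq> {1..l} \<and> card B = k}"
  let ?E = "\<lambda>B. {w \<in> space M. \<forall>j\<in>{1..l}. G (c - int j) w = (j \<in> B)}"
  have eq: "{w \<in> space M. card {j \<in> {1..l}. G (c - int j) w} = k} = (\<Union>B\<in>?BB. ?E B)"
  proof (intro equalityI subsetI)
    fix w assume "w \<in> {w \<in> space M. card {j \<in> {1..l}. G (c - int j) w} = k}"
    then show "w \<in> (\<Union>B\<in>?BB. ?E B)"
      by (intro UN_I[of "{j \<in> {1..l}. G (c - int j) w}"]) auto
  next
    fix w assume "w \<in> (\<Union>B\<in>?BB. ?E B)"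
    then obtain B where B: "B \<subseteq> {1..l}" "card B = k" "w \<in> ?E B" by auto
    then have "{j \<in> {1..l}. G (c - int j) w} = B" by auto
    then show "w \<in> {w \<in> space M. card {j \<in> {1..l}. G (c - int j) w} = k}" using B by auto
  qed
  have fin: "finite ?BB" by (rule finite_subset[of _ "Pow {1..l}"]) auto
  have disj: "disjoint_family_on ?E ?BB"
    unfolding disjoint_family_on_def by auto
  have each: "prob (?E B) = pg ^ k * (1 - pg) ^ (l - k)" if B: "B \<in> ?BB" for B
  proof -
    have "prob (?E B) = (\<Prod>j\<in>{1..l}. if j \<in> B then pg else 1 - pg)"
      by (rule G_pattern)
    also have "\<dots> = (\<Prod>j\<in>{1..l} \<inter> {x. x \<in> B}. pg) * (\<Prod>j\<in>{1..l} \<inter> - {x. x \<in> B}. 1 - pg)"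
      by (rule prod.If_cases) simp
    also have "{1..l} \<inter> {x. x \<in> B} = B" using B by auto
    also have "{1..l} \<inter> - {x. x \<in> B} = {1..l} - B" by auto
    finally have p: "prob (?E B) = (\<Prod>j\<in>B. pg) * (\<Prod>j\<in>{1..l} - B. 1 - pg)" .
    have cd: "card ({1..l} - B) = l - k"
    proof -
      have "B \<subseteq> {1..l}" "card B = k" using B by auto
      moreover have "finite B" using \<open>B \<subseteq> {1..l}\<close> finite_subset by blast
      ultimately show ?thesis using card_Diff_subset[of B "{1..l}"] by simp
    qed
    show ?thesis using p cd B by simp
  qed
  have "prob (\<Union>B\<in>?BB. ?E B) = (\<Sum>B\<in>?BB. prob (?E B))"
    by (rule measure_finite_Union[OF fin _ disj]) (auto simp: emeasure_eq_measure)
  also have "\<dots> = (\<Sum>B\<in>?BB. pg ^ k * (1 - pg) ^ (l - k))" by (rule sum.cong) (use each in auto)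
  also have "\<dots> = real (card ?BB) * pg ^ k * (1 - pg) ^ (l - k)" by simp
  also have "card ?BB = l choose k" using n_subsets[of "{1..l}" k] by simp
  finally show ?thesis unfolding eq .
qed

lemma indep2:
  assumes AB: "A \<inter> B = {}" "A \<subseteq> JJ" "B \<subseteq> JJ"
    and f[measurable]: "Measurable.pred (PiM A (\<lambda>_. count_space UNIV)) f"
    and g[measurable]: "Measurable.pred (PiM B (\<lambda>_. count_space UNIV)) g"
  shows "prob {w \<in> space M. f (restrict (\<lambda>j. X j w) A) \<and> g (restrict (\<lambda>j. X j w) B)}
       = prob {w \<in> space M. f (restrict (\<lambda>j. X j w) A)} * prob {w \<in> space M. g (restrict (\<lambda>j. X j w) B)}"
proof -
  have iv: "indep_var (PiM A (\<lambda>_. count_space UNIV)) (\<lambda>w. restrict (\<lambda>j. X j w) A)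
                      (PiM B (\<lambda>_. count_space UNIV)) (\<lambda>w. restrict (\<lambda>j. X j w) B)"
    by (rule indep_var_restrict[OF indep AB])
  let ?Xa = "{x \<in> space (PiM A (\<lambda>_. count_space UNIV)). f x}"
  let ?Xb = "{x \<in> space (PiM B (\<lambda>_. count_space UNIV)). g x}"
  have sa: "?Xa \<in> sets (PiM A (\<lambda>_. count_space UNIV))" by measurable
  have sb: "?Xb \<in> sets (PiM B (\<lambda>_. count_space UNIV))" by measurable
  note r = indep_varD[OF iv sa sb]
  have sp: "\<And>w C. restrict (\<lambda>j. X j w) C \<in> space (PiM C (\<lambda>_. count_space UNIV))"
    by (simp add: space_PiM)
  have e1: "(\<lambda>x. (restrict (\<lambda>j. X j x) A, restrict (\<lambda>j. X j x) B)) -` (?Xa \<times> ?Xb) \<inter> space M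
      = {w \<in> space M. f (restrict (\<lambda>j. X j w) A) \<and> g (restrict (\<lambda>j. X j w) B)}"
    using sp by auto
  have e2: "(\<lambda>w. restrict (\<lambda>j. X j w) A) -` ?Xa \<inter> space M = {w \<in> space M. f (restrict (\<lambda>j. X j w) A)}"
    using sp by auto
  have e3: "(\<lambda>w. restrict (\<lambda>j. X j w) B) -` ?Xb \<inter> space M = {w \<in> space M. g (restrict (\<lambda>j. X j w) B)}"
    using sp by auto
  show ?thesis using r unfolding e1 e2 e3 .
qed

lemma decomp:
  fixes b :: "'a \<Rightarrow> 'c::countable"
  assumes b[measurable]: "b \<in> measurable M (count_space UNIV)"
    and E[measurable]: "\<And>c. Measurable.pred M (E c)"
  shows "emeasure M {w \<in> space M. E (b w) w} = (\<integral>\<^sup>+c. emeasure M {w \<in> space M. b w = c \<and> E c w} \<partial>count_space UNIV)"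
proof -
  have "{w \<in> space M. E (b w) w} = (\<Union>c\<in>UNIV. {w \<in> space M. b w = c \<and> E c w})" by auto
  also have "emeasure M \<dots> = (\<integral>\<^sup>+c. emeasure M {w \<in> space M. b w = c \<and> E c w} \<partial>count_space UNIV)"
    by (rule emeasure_UN_countable) (auto simp: disjoint_family_on_def)
  finally show ?thesis .
qed

lemma decomp_const:
  fixes b :: "'a \<Rightarrow> 'c::countable"
  assumes b[measurable]: "b \<in> measurable M (count_space UNIV)"
    and E[measurable]: "\<And>c. Measurable.pred M (E c)"
    and K: "K \<ge> 0" "\<And>c. prob {w \<in> space M. b w = c \<and> E c w} = prob {w \<in> space M. b w = c} * K"
  shows "prob {w \<in> space M. E (b w) w} = K"
proof -
  have "emeasure M {w \<in> space M. E (b w) w} = (\<integral>\<^sup>+c. emeasure M {w \<in> space M. b w = c \<and> E c w} \<partial>count_space UNIV)"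
    by (rule decomp) measurable
  also have "\<dots> = (\<integral>\<^sup>+c. emeasure M {w \<in> space M. b w = c \<and> True} * ennreal K \<partial>count_space UNIV)"
    by (rule nn_integral_cong) (simp add: emeasure_eq_measure K ennreal_mult)
  also have "\<dots> = (\<integral>\<^sup>+c. emeasure M {w \<in> space M. b w = c \<and> True} \<partial>count_space UNIV) * ennreal K"
    by (intro nn_integral_multc) auto
  also have "(\<integral>\<^sup>+c. emeasure M {w \<in> space M. b w = c \<and> True} \<partial>count_space UNIV) = emeasure M {w \<in> space M. True}"
    by (rule decomp[symmetric]) measurable
  finally have "emeasure M {w \<in> space M. E (b w) w} = ennreal K" by (simp add: emeasure_space_1)
  then show ?thesis using K(1) by (simp add: emeasure_eq_measure)
qed

abbreviation "LK K \<equiv> Inr ` (K \<times> (UNIV :: int set))"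

lemma LK_sub: "K \<subseteq> {1..N} \<Longrightarrow> LK K \<subseteq> JJ" by auto

lemma R_S: "Inr (i, s) \<in> A \<Longrightarrow> Sx i s (restrict (\<lambda>j. X j w) A) = S i s w"
  by (simp add: Sx_def)

lemma ld_R: "i \<in> K \<Longrightarrow> link_delay Sx i c (restrict (\<lambda>j. X j w) (LK K)) = link_delay S i c w"
  by (rule ld_cong) (simp add: Sx_def)

lemma ld_R': "i \<in> K \<Longrightarrow> link_delay Sx i c (restrict (\<lambda>j. X j w) (LK K \<union> range Inl)) = link_delay S i c w"
  by (rule ld_cong) (simp add: Sx_def)

lemma bt_R: "(\<And>j. j < k \<Longrightarrow> n - j \<in> K) \<Longrightarrow> back_time Sx n t k (restrict (\<lambda>j. X j w) (LK K)) = back_time S n t k w"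
  by (rule bt_cong) (simp add: Sx_def)

lemma hd_R: "(\<And>j. j < n - i \<Longrightarrow> n - j \<in> K) \<Longrightarrow> i \<in> K \<Longrightarrow> hop_delay Sx n t i (restrict (\<lambda>j. X j w) (LK K)) = hop_delay S n t i w"
  unfolding hop_delay_def by (simp add: bt_R ld_R)

lemma cnt_R: "card {j \<in> {1..l}. Gx (c - int j) (restrict (\<lambda>j. X j w) (range Inl))} = card {j \<in> {1..l}. G (c - int j) w}"
  by (simp add: Gx_def)

lemma cnt_R': "card {j \<in> {1..l}. Gx (c - int j) (restrict (\<lambda>j. X j w) (LK K \<union> range Inl))} = card {j \<in> {1..l}. G (c - int j) w}"
  by (simp add: Gx_def)

lemma ld_M: "i \<in> {1..N} \<Longrightarrow> link_delay S i c \<in> measurable M (count_space UNIV)"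
  by (rule ld_meas) (rule S_pred)

lemma bt_M: "(\<And>j. j < k \<Longrightarrow> n - j \<in> {1..N}) \<Longrightarrow> back_time S n t k \<in> measurable M (count_space UNIV)"
  by (rule bt_meas) (rule S_pred, auto)

lemma hd_M: "i \<in> {1..n} \<Longrightarrow> n \<le> N \<Longrightarrow> hop_delay S n t i \<in> measurable M (count_space UNIV)"
  by (rule hd_meas_gen) (rule S_pred, auto)+

lemma cnt_pred: "Measurable.pred M (\<lambda>w. card {j \<in> {1..l}. G (c - int j) w} = k)"
proof -
  note [measurable] = G_pred
  show ?thesis by measurable
qed

lemma ld_shift:
  assumes i: "i \<in> {1..N}"
  shows "prob {w \<in> space M. link_delay S i c w \<in> A} = prob {w \<in> space M. link_delay S i c' w \<in> A}"
proof -
  have em: "emeasure M {w \<in> space M. link_delay S i d w \<in> A}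
        = (\<integral>\<^sup>+l. emeasure M {w \<in> space M. link_delay S i d w = l \<and> l \<in> A} \<partial>count_space UNIV)" for d
    by (rule decomp[OF ld_M[OF i]]) simp
  have "emeasure M {w \<in> space M. link_delay S i c w = l \<and> l \<in> A} = emeasure M {w \<in> space M. link_delay S i c' w = l \<and> l \<in> A}" for l
  proof (cases "l \<in> A")
    case True
    then show ?thesis using geo[OF i, of c l] geo[OF i, of c' l] by (simp add: emeasure_eq_measure)
  next
    case False then show ?thesis by simp
  qed
  then have "emeasure M {w \<in> space M. link_delay S i c w \<in> A} = emeasure M {w \<in> space M. link_delay S i c' w \<in> A}"
    unfolding em by simp
  then show ?thesis by (simp add: measure_def)
qed

lemma marginal:
  assumes i: "i \<in> {1..N}"
  shows "prob {w \<in> space M. hop_delay S N t i w \<in> A} = prob {w \<in> space M. link_delay S i 0 w \<in> A}"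
proof -
  let ?b = "back_time S N t (N - i)"
  have bm[measurable]: "?b \<in> measurable M (count_space UNIV)" by (rule bt_M) (use i in auto)
  have Em: "Measurable.pred M (\<lambda>w. link_delay S i c w \<in> A)" for c
    using ld_M[OF i, of c] by measurable
  have "prob {w \<in> space M. (\<lambda>c w. link_delay S i c w \<in> A) (?b w) w} = prob {w \<in> space M. link_delay S i 0 w \<in> A}"
  proof (rule decomp_const[OF bm Em])
    fix c
    let ?A1 = "LK {Suc i..N}" and ?B1 = "LK {i}"
    have "prob {w \<in> space M. ?b w = c \<and> link_delay S i c w \<in> A}
       = prob {w \<in> space M. (\<lambda>x. back_time Sx N t (N - i) x = c) (restrict (\<lambda>j. X j w) ?A1)
                          \<and> (\<lambda>x. link_delay Sx i c x \<in> A) (restrict (\<lambda>j. X j w) ?B1)}"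
      using i by (intro arg_cong[where f=prob] Collect_cong conj_cong refl) (auto simp: bt_R ld_R)
    also have "\<dots> = prob {w \<in> space M. (\<lambda>x. back_time Sx N t (N - i) x = c) (restrict (\<lambda>j. X j w) ?A1)}
                  * prob {w \<in> space M. (\<lambda>x. link_delay Sx i c x \<in> A) (restrict (\<lambda>j. X j w) ?B1)}"
    proof (rule indep2)
      show "Measurable.pred (PiM ?A1 (\<lambda>_. count_space UNIV)) (\<lambda>x. back_time Sx N t (N - i) x = c)"
        using bt_pm[of "N - i" N ?A1 t] by auto
      show "Measurable.pred (PiM ?B1 (\<lambda>_. count_space UNIV)) (\<lambda>x. link_delay Sx i c x \<in> A)"
        using ld_pm[of i ?B1 c] by measurable
    qed (use i in auto)
    also have "\<dots> = prob {w \<in> space M. ?b w = c} * prob {w \<in> space M. link_delay S i c w \<in> A}"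
      using i by (simp add: bt_R ld_R)
    also have "prob {w \<in> space M. link_delay S i c w \<in> A} = prob {w \<in> space M. link_delay S i 0 w \<in> A}"
      by (rule ld_shift[OF i])
    finally show "prob {w \<in> space M. ?b w = c \<and> link_delay S i c w \<in> A}
        = prob {w \<in> space M. ?b w = c} * prob {w \<in> space M. link_delay S i 0 w \<in> A}" .
  qed simp
  then show ?thesis unfolding hop_delay_def by simp
qed

lemma Qind:
  "n \<le> N \<Longrightarrow> prob {w \<in> space M. \<forall>i\<in>{1..n}. hop_delay S n t i w \<in> A i}
     = (\<Prod>i\<in>{1..n}. prob {w \<in> space M. link_delay S i 0 w \<in> A i})"
proof (induction n arbitrary: t)
  case 0 then show ?case by (simp add: prob_space)
next
  case (Suc n)
  have n: "n \<le> N" and i0: "Suc n \<in> {1..N}" using Suc.prems by auto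
  let ?ld = "link_delay S (Suc n) t"
  let ?P = "\<Prod>i\<in>{1..n}. prob {w \<in> space M. link_delay S i 0 w \<in> A i}"
  let ?E = "\<lambda>l w. l \<in> A (Suc n) \<and> (\<forall>i\<in>{1..n}. hop_delay S n (t - int l) i w \<in> A i)"
  have ldm[measurable]: "?ld \<in> measurable M (count_space UNIV)" by (rule ld_M[OF i0])
  have hdm[measurable]: "hop_delay S n c i \<in> measurable M (count_space UNIV)" if "i \<in> {1..n}" for c i
    by (rule hd_M) (use that n in auto)
  have Em[measurable]: "Measurable.pred M (?E l)" for l
    by measurable
  have set: "{w \<in> space M. \<forall>i\<in>{1..Suc n}. hop_delay S (Suc n) t i w \<in> A i} = {w \<in> space M. ?E (?ld w) w}"
  proof -
    have "(\<forall>i\<in>{1..Suc n}. hop_delay S (Suc n) t i w \<in> A i)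
        \<longleftrightarrow> hop_delay S (Suc n) t (Suc n) w \<in> A (Suc n) \<and> (\<forall>i\<in>{1..n}. hop_delay S (Suc n) t i w \<in> A i)" for w
      by (simp add: atLeastAtMostSuc_conv)
    moreover have "(\<forall>i\<in>{1..n}. hop_delay S (Suc n) t i w \<in> A i) \<longleftrightarrow> (\<forall>i\<in>{1..n}. hop_delay S n (t - int (?ld w)) i w \<in> A i)" for w
      using hd_shift[of _ n S t w] by auto
    ultimately show ?thesis by (auto simp: hd_top)
  qed
  have each: "prob {w \<in> space M. ?ld w = l \<and> ?E l w} = prob {w \<in> space M. ?ld w = l \<and> l \<in> A (Suc n)} * ?P" for l
  proof -
    let ?A1 = "LK {Suc n}" and ?B1 = "LK {1..n}"
    let ?f = "\<lambda>x. link_delay Sx (Suc n) t x = l \<and> l \<in> A (Suc n)"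
    let ?g = "\<lambda>x. \<forall>i\<in>{1..n}. hop_delay Sx n (t - int l) i x \<in> A i"
    have hR: "hop_delay Sx n c i (restrict (\<lambda>j. X j w) ?B1) = hop_delay S n c i w"
      if "i \<in> {1..n}" for i w c
      by (rule hd_R) (use that in auto)
    have "prob {w \<in> space M. ?ld w = l \<and> ?E l w}
       = prob {w \<in> space M. ?f (restrict (\<lambda>j. X j w) ?A1) \<and> ?g (restrict (\<lambda>j. X j w) ?B1)}"
    proof -
      have gR: "?g (restrict (\<lambda>j. X j w) ?B1) \<longleftrightarrow> (\<forall>i\<in>{1..n}. hop_delay S n (t - int l) i w \<in> A i)" for w
        by (rule ball_cong[OF refl]) (subst hR, assumption, rule refl)
      have fR: "?f (restrict (\<lambda>j. X j w) ?A1) \<longleftrightarrow> ?ld w = l \<and> l \<in> A (Suc n)" for w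
        by (simp add: ld_R)
      show ?thesis by (simp only: gR fR conj_assoc)
    qed
    also have "\<dots> = prob {w \<in> space M. ?f (restrict (\<lambda>j. X j w) ?A1)} * prob {w \<in> space M. ?g (restrict (\<lambda>j. X j w) ?B1)}"
    proof (rule indep2)
      show "Measurable.pred (PiM ?A1 (\<lambda>_. count_space UNIV)) ?f"
        using ld_pm[of "Suc n" ?A1 t] by measurable
      have [measurable]: "hop_delay Sx n (t - int l) i \<in> measurable (PiM ?B1 (\<lambda>_. count_space UNIV)) (count_space UNIV)"
        if "i \<in> {1..n}" for i
        by (rule hd_meas_gen; rule Sx_pred) (use that in auto)
      show "Measurable.pred (PiM ?B1 (\<lambda>_. count_space UNIV)) ?g"
        by measurable
    qed (use i0 in auto)
    also have "prob {w \<in> space M. ?f (restrict (\<lambda>j. X j w) ?A1)} = prob {w \<in> space M. ?ld w = l \<and> l \<in> A (Suc n)}"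
      by (simp add: ld_R)
    also have "prob {w \<in> space M. ?g (restrict (\<lambda>j. X j w) ?B1)} = prob {w \<in> space M. \<forall>i\<in>{1..n}. hop_delay S n (t - int l) i w \<in> A i}"
      by (intro arg_cong[where f=prob] Collect_cong conj_cong refl ball_cong) (subst hR, simp, rule refl)
    also have "\<dots> = ?P" by (rule Suc.IH[OF n])
    finally show ?thesis .
  qed
  have "emeasure M {w \<in> space M. ?E (?ld w) w} = (\<integral>\<^sup>+l. emeasure M {w \<in> space M. ?ld w = l \<and> ?E l w} \<partial>count_space UNIV)"
    by (rule decomp) measurable
  also have "\<dots> = (\<integral>\<^sup>+l. emeasure M {w \<in> space M. ?ld w = l \<and> l \<in> A (Suc n)} * ennreal ?P \<partial>count_space UNIV)"
    by (rule nn_integral_cong) (simp only: emeasure_eq_measure each, rule ennreal_mult, simp, simp add: prod_nonneg)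
  also have "\<dots> = (\<integral>\<^sup>+l. emeasure M {w \<in> space M. ?ld w = l \<and> l \<in> A (Suc n)} \<partial>count_space UNIV) * ennreal ?P"
    by (intro nn_integral_multc) auto
  also have "(\<integral>\<^sup>+l. emeasure M {w \<in> space M. ?ld w = l \<and> l \<in> A (Suc n)} \<partial>count_space UNIV)
      = emeasure M {w \<in> space M. ?ld w \<in> A (Suc n)}"
    by (rule decomp[symmetric]) measurable
  finally have "prob {w \<in> space M. ?E (?ld w) w} = prob {w \<in> space M. ?ld w \<in> A (Suc n)} * ?P"
    by (simp add: emeasure_eq_measure ennreal_mult[symmetric] prod_nonneg)
  also have "prob {w \<in> space M. ?ld w \<in> A (Suc n)} = prob {w \<in> space M. link_delay S (Suc n) 0 w \<in> A (Suc n)}"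
    by (rule ld_shift[OF i0])
  also have "\<dots> * ?P = (\<Prod>i\<in>{1..Suc n}. prob {w \<in> space M. link_delay S i 0 w \<in> A i})"
    by (simp add: atLeastAtMostSuc_conv)
  finally show ?case unfolding set .
qed

lemma ld_shift1:
  assumes i: "i \<in> {1..N}"
  shows "prob {w \<in> space M. link_delay S i c w = l} = prob {w \<in> space M. link_delay S i 0 w = l}"
  using ld_shift[OF i, of c "{l}" 0] by simp

lemma joint:
  assumes i: "i \<in> {1..N}"
  shows "prob {w \<in> space M. hop_delay S N t i w = l \<and> hop_gen G S N t i w = k}
       = real (l choose k) * pg ^ k * (1 - pg) ^ (l - k) * prob {w \<in> space M. hop_delay S N t i w = l}"
proof -
  let ?b = "back_time S N t (N - i)"
  let ?Bn = "real (l choose k) * pg ^ k * (1 - pg) ^ (l - k)"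
  let ?E = "\<lambda>c w. link_delay S i c w = l \<and> card {j \<in> {1..l}. G (c - int j) w} = k"
  have bm[measurable]: "?b \<in> measurable M (count_space UNIV)" by (rule bt_M) (use i in auto)
  have [measurable]: "link_delay S i c \<in> measurable M (count_space UNIV)" for c by (rule ld_M[OF i])
  have [measurable]: "Measurable.pred M (\<lambda>w. card {j \<in> {1..l}. G (c - int j) w} = k)" for c
    by (rule cnt_pred)
  have Em: "Measurable.pred M (?E c)" for c by measurable
  have Bn0: "?Bn \<ge> 0" using pg by simp
  have set: "{w \<in> space M. hop_delay S N t i w = l \<and> hop_gen G S N t i w = k} = {w \<in> space M. ?E (?b w) w}"
    unfolding hop_gen_def hop_delay_def by auto
  have "prob {w \<in> space M. ?E (?b w) w} = prob {w \<in> space M. link_delay S i 0 w = l} * ?Bn"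
  proof (rule decomp_const[OF bm Em])
    fix c
    let ?A1 = "LK {Suc i..N}" and ?B1 = "LK {i} \<union> range Inl"
    let ?f = "\<lambda>x. back_time Sx N t (N - i) x = c"
    let ?g = "\<lambda>x. link_delay Sx i c x = l \<and> card {j \<in> {1..l}. Gx (c - int j) x} = k"
    have fR: "?f (restrict (\<lambda>j. X j w) ?A1) \<longleftrightarrow> ?b w = c" for w
      by (subst bt_R) (use i in auto)
    have gR: "?g (restrict (\<lambda>j. X j w) ?B1) \<longleftrightarrow> ?E c w" for w
      by (simp add: ld_R' Gx_def)
    have "prob {w \<in> space M. ?b w = c \<and> ?E c w}
       = prob {w \<in> space M. ?f (restrict (\<lambda>j. X j w) ?A1) \<and> ?g (restrict (\<lambda>j. X j w) ?B1)}"
      by (simp only: fR gR)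
    also have "\<dots> = prob {w \<in> space M. ?f (restrict (\<lambda>j. X j w) ?A1)} * prob {w \<in> space M. ?g (restrict (\<lambda>j. X j w) ?B1)}"
    proof (rule indep2)
      show "Measurable.pred (PiM ?A1 (\<lambda>_. count_space UNIV)) ?f"
        using bt_pm[of "N - i" N ?A1 t] by auto
      have [measurable]: "Measurable.pred (PiM ?B1 (\<lambda>_. count_space UNIV)) (Gx s)" for s
        by (rule Gx_pred) auto
      have [measurable]: "link_delay Sx i c \<in> measurable (PiM ?B1 (\<lambda>_. count_space UNIV)) (count_space UNIV)"
        by (rule ld_pm) auto
      show "Measurable.pred (PiM ?B1 (\<lambda>_. count_space UNIV)) ?g"
        by measurable
    qed (use i in auto)
    also have "prob {w \<in> space M. ?f (restrict (\<lambda>j. X j w) ?A1)} = prob {w \<in> space M. ?b w = c}"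
      by (simp only: fR)
    also have "prob {w \<in> space M. ?g (restrict (\<lambda>j. X j w) ?B1)} = prob {w \<in> space M. ?E c w}"
      by (simp only: gR)
    also have "prob {w \<in> space M. ?E c w} = prob {w \<in> space M. link_delay S i c w = l} * prob {w \<in> space M. card {j \<in> {1..l}. G (c - int j) w} = k}"
    proof -
      let ?f2 = "\<lambda>x. link_delay Sx i c x = l"
      let ?g2 = "\<lambda>x. card {j \<in> {1..l}. Gx (c - int j) x} = k"
      have "prob {w \<in> space M. ?E c w} = prob {w \<in> space M. ?f2 (restrict (\<lambda>j. X j w) (LK {i})) \<and> ?g2 (restrict (\<lambda>j. X j w) (range Inl))}"
        by (simp add: ld_R Gx_def)
      also have "\<dots> = prob {w \<in> space M. ?f2 (restrict (\<lambda>j. X j w) (LK {i}))} * prob {w \<in> space M. ?g2 (restrict (\<lambda>j. X j w) (range Inl))}"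
      proof (rule indep2)
        show "Measurable.pred (PiM (LK {i}) (\<lambda>_. count_space UNIV)) ?f2"
          using ld_pm[of i "LK {i}" c] by measurable
        have [measurable]: "Measurable.pred (PiM (range Inl) (\<lambda>_. count_space UNIV)) (Gx s)" for s
          by (rule Gx_pred) auto
        show "Measurable.pred (PiM (range Inl) (\<lambda>_. count_space UNIV)) ?g2"
          by measurable
      qed (use i in auto)
      also have "\<dots> = prob {w \<in> space M. link_delay S i c w = l} * prob {w \<in> space M. card {j \<in> {1..l}. G (c - int j) w} = k}"
        by (simp add: ld_R Gx_def)
      finally show ?thesis .
    qed
    also have "\<dots> = prob {w \<in> space M. link_delay S i 0 w = l} * ?Bn"
      using ld_shift1[OF i, of c l] binom[of l c k] by simp
    finally show "prob {w \<in> space M. ?b w = c \<and> ?E c w} = prob {w \<in> space M. ?b w = c} * (prob {w \<in> space M. link_delay S i 0 w = l} * ?Bn)" .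
  qed (use Bn0 in simp)
  moreover have "prob {w \<in> space M. hop_delay S N t i w = l} = prob {w \<in> space M. link_delay S i 0 w = l}"
    using marginal[OF i, of t "{l}"] by simp
  ultimately show ?thesis unfolding set by simp
qed

lemma nn_split:
  fixes Y :: "'a \<Rightarrow> nat"
  assumes Y[measurable]: "Y \<in> measurable M (count_space UNIV)" and h[measurable]: "h \<in> borel_measurable M"
  shows "(\<integral>\<^sup>+w. h w \<partial>M) = (\<Sum>l. \<integral>\<^sup>+w. h w * indicator {w \<in> space M. Y w = l} w \<partial>M)"
proof -
  have "(\<integral>\<^sup>+w. h w \<partial>M) = (\<integral>\<^sup>+w. (\<Sum>l. h w * indicator {w \<in> space M. Y w = l} w) \<partial>M)"
  proof (rule nn_integral_cong)
    fix w assume w: "w \<in> space M"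
    have "(\<lambda>l. h w * indicator {w \<in> space M. Y w = l} w) = (\<lambda>l. if l = Y w then h w else 0)"
      using w by (auto simp: indicator_def)
    moreover have "(\<lambda>l. if l = Y w then h w else 0) sums h w"
      using sums_single[of "Y w" "\<lambda>_. h w"] by simp
    ultimately show "h w = (\<Sum>l. h w * indicator {w \<in> space M. Y w = l} w)"
      by (simp add: sums_iff)
  qed
  also have "\<dots> = (\<Sum>l. \<integral>\<^sup>+w. h w * indicator {w \<in> space M. Y w = l} w \<partial>M)"
    by (rule nn_integral_suminf) measurable
  finally show ?thesis .
qed

lemma nn_nat:
  fixes Y :: "'a \<Rightarrow> nat"
  assumes Y[measurable]: "Y \<in> measurable M (count_space UNIV)"
  shows "(\<integral>\<^sup>+w. f (Y w) \<partial>M) = (\<Sum>l. f l * emeasure M {w \<in> space M. Y w = l})"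
proof -
  have hm: "(\<lambda>w. f (Y w)) \<in> borel_measurable M"
    using measurable_compose[OF Y, of f borel] by simp
  have "(\<integral>\<^sup>+w. f (Y w) \<partial>M) = (\<Sum>l. \<integral>\<^sup>+w. f (Y w) * indicator {w \<in> space M. Y w = l} w \<partial>M)"
    by (rule nn_split[OF Y hm])
  also have "\<dots> = (\<Sum>l. f l * emeasure M {w \<in> space M. Y w = l})"
  proof (rule suminf_cong)
    fix l
    have "(\<integral>\<^sup>+w. f (Y w) * indicator {w \<in> space M. Y w = l} w \<partial>M) = (\<integral>\<^sup>+w. f l * indicator {w \<in> space M. Y w = l} w \<partial>M)"
      by (rule nn_integral_cong) (auto simp: indicator_def)
    also have "\<dots> = f l * emeasure M {w \<in> space M. Y w = l}"
      by (rule nn_integral_cmult_indicator) measurable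
    finally show "(\<integral>\<^sup>+w. f (Y w) * indicator {w \<in> space M. Y w = l} w \<partial>M) = f l * emeasure M {w \<in> space M. Y w = l}" .
  qed
  finally show ?thesis .
qed

end

lemma geo_mean:
  fixes r :: real
  assumes r: "0 < r" "r \<le> 1"
  shows "(\<lambda>l. real l * (if l = 0 then 0 else (1 - r) ^ (l - 1) * r)) sums (1 / r)"
proof -
  have "norm (1 - r) < 1" using r by simp
  from geometric_deriv_sums[OF this] have "(\<lambda>n. of_nat (Suc n) * (1 - r) ^ n) sums (1 / (1 - (1 - r)) ^ 2)" .
  then have "(\<lambda>n. of_nat (Suc n) * (1 - r) ^ n * r) sums (1 / r ^ 2 * r)"
    by (intro sums_mult2) simp
  moreover have "1 / r ^ 2 * r = 1 / r" using r by (simp add: power2_eq_square)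
  ultimately have "(\<lambda>n. real (Suc n) * (if Suc n = 0 then 0 else (1 - r) ^ (Suc n - 1) * r)) sums (1 / r)"
    by (simp add: mult.assoc)
  then show ?thesis by (subst (asm) sums_Suc_iff) simp
qed

lemma binom_mean:
  fixes p :: real
  shows "(\<Sum>k\<le>l. real k * (real (l choose k) * p ^ k * (1 - p) ^ (l - k))) = real l * p"
proof (cases l)
  case 0 then show ?thesis by simp
next
  case (Suc m)
  have "(\<Sum>k\<le>Suc m. real k * (real (Suc m choose k) * p ^ k * (1 - p) ^ (Suc m - k)))
      = (\<Sum>k\<le>m. real (Suc k) * (real (Suc m choose Suc k) * p ^ Suc k * (1 - p) ^ (Suc m - Suc k)))"
    by (subst sum.atMost_Suc_shift) simp
  also have "\<dots> = (\<Sum>k\<le>m. real (Suc m) * p * (real (m choose k) * p ^ k * (1 - p) ^ (m - k)))"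
  proof (rule sum.cong[OF refl])
    fix k assume "k \<in> {..m}"
    have e: "real (Suc k) * real (Suc m choose Suc k) = real (Suc m) * real (m choose k)"
      using Suc_times_binomial[of k m] by (metis of_nat_mult)
    have "real (Suc k) * (real (Suc m choose Suc k) * p ^ Suc k * (1 - p) ^ (Suc m - Suc k))
        = (real (Suc k) * real (Suc m choose Suc k)) * p * (p ^ k * (1 - p) ^ (m - k))"
      by (simp add: algebra_simps)
    also have "\<dots> = real (Suc m) * p * (real (m choose k) * p ^ k * (1 - p) ^ (m - k))"
      unfolding e by (simp add: algebra_simps)
    finally show "real (Suc k) * (real (Suc m choose Suc k) * p ^ Suc k * (1 - p) ^ (Suc m - Suc k))
        = real (Suc m) * p * (real (m choose k) * p ^ k * (1 - p) ^ (m - k))" .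
  qed
  also have "\<dots> = real (Suc m) * p * (\<Sum>k\<le>m. real (m choose k) * p ^ k * (1 - p) ^ (m - k))"
    by (simp add: sum_distrib_left)
  also have "(\<Sum>k\<le>m. real (m choose k) * p ^ k * (1 - p) ^ (m - k)) = (p + (1 - p)) ^ m"
    by (rule binomial_ring[symmetric])
  finally show ?thesis using Suc by simp
qed

context vsetup
begin

lemma hd_dist:
  assumes i: "i \<in> {1..N}"
  shows "prob {w \<in> space M. hop_delay S N t i w = l} = (if l = 0 then 0 else (1 - \<rho> i) ^ (l - 1) * \<rho> i)"
  using marginal[OF i, of t "{l}"] geo[OF i, of 0 l] by simp

lemma cnt_meas: "(\<lambda>w. card {j \<in> {1..m}. G (c - int j) w}) \<in> measurable M (count_space UNIV)"
  unfolding measurable_count_space_eq2_countable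
proof (intro conjI ballI)
  fix k :: nat
  have "{w \<in> space M. card {j \<in> {1..m}. G (c - int j) w} = k} \<in> sets M"
    using cnt_pred[of m c k] by (simp only: pred_def)
  moreover have "(\<lambda>w. card {j \<in> {1..m}. G (c - int j) w}) -` {k} \<inter> space M = {w \<in> space M. card {j \<in> {1..m}. G (c - int j) w} = k}"
    by blast
  ultimately show "(\<lambda>w. card {j \<in> {1..m}. G (c - int j) w}) -` {k} \<inter> space M \<in> sets M" by (simp only:)
qed blast

lemma hg_M:
  assumes i: "i \<in> {1..N}"
  shows "hop_gen G S N t i \<in> measurable M (count_space UNIV)"
proof -
  have bm: "back_time S N t (N - i) \<in> measurable M (count_space UNIV)" by (rule bt_M) (use i in auto)
  have inner: "(\<lambda>w. card {j \<in> {1..link_delay S i c w}. G (c - int j) w}) \<in> measurable M (count_space UNIV)" for c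
    by (rule measurable_compose_countable[where f="\<lambda>m w. card {j \<in> {1..m}. G (c - int j) w}" and g="link_delay S i c", OF cnt_meas ld_M[OF i]])
  have "(\<lambda>w. card {j \<in> {1..link_delay S i (back_time S N t (N - i) w) w}. G (back_time S N t (N - i) w - int j) w}) \<in> measurable M (count_space UNIV)"
    by (rule measurable_compose_countable[where f="\<lambda>c w. card {j \<in> {1..link_delay S i c w}. G (c - int j) w}" and g="back_time S N t (N - i)", OF inner bm])
  then show ?thesis unfolding hop_gen_def hop_delay_def .
qed

lemma hd_nn:
  assumes i: "i \<in> {1..N}"
  shows "(\<integral>\<^sup>+w. ennreal (real (hop_delay S N t i w)) \<partial>M) = ennreal (1 / \<rho> i)"
proof -
  let ?g = "\<lambda>l. real l * (if l = 0 then 0 else (1 - \<rho> i) ^ (l - 1) * \<rho> i)"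
  have r: "0 < \<rho> i" "\<rho> i \<le> 1" using rho[OF i] by auto
  have gs: "?g sums (1 / \<rho> i)" by (rule geo_mean[OF r])
  have g0: "0 \<le> ?g l" for l using r by simp
  have hdm0: "hop_delay S N t i \<in> measurable M (count_space UNIV)" by (rule hd_M) (use i in auto)
  have "(\<integral>\<^sup>+w. ennreal (real (hop_delay S N t i w)) \<partial>M)
      = (\<Sum>l. ennreal (real l) * emeasure M {w \<in> space M. hop_delay S N t i w = l})"
    by (rule nn_nat[OF hdm0, of "\<lambda>n. ennreal (real n)"])
  also have "\<dots> = (\<Sum>l. ennreal (?g l))"
  proof (rule suminf_cong)
    fix l
    have r2: "0 \<le> 1 - \<rho> i" using r by simp
    have "0 \<le> (if l = 0 then 0 else (1 - \<rho> i) ^ (l - 1) * \<rho> i)" using r r2 by simp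
    then show "ennreal (real l) * emeasure M {w \<in> space M. hop_delay S N t i w = l} = ennreal (?g l)"
      by (simp only: emeasure_eq_measure hd_dist[OF i] ennreal_mult[symmetric] of_nat_0_le_iff)
  qed
  also have "\<dots> = ennreal (\<Sum>l. ?g l)"
    by (rule suminf_ennreal2[OF g0]) (use gs in \<open>simp add: sums_iff\<close>)
  also have "(\<Sum>l. ?g l) = 1 / \<rho> i" using gs by (simp add: sums_iff)
  finally show ?thesis .
qed

lemma hg_nn:
  assumes i: "i \<in> {1..N}"
  shows "(\<integral>\<^sup>+w. ennreal (real (hop_gen G S N t i w)) \<partial>M) = ennreal (pg / \<rho> i)"
proof -
  let ?geo = "\<lambda>l. (if l = 0 then 0 else (1 - \<rho> i) ^ (l - 1) * \<rho> i)"
  let ?g = "\<lambda>l. real l * ?geo l"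
  have r: "0 < \<rho> i" "\<rho> i \<le> 1" using rho[OF i] by auto
  have gs: "?g sums (1 / \<rho> i)" by (rule geo_mean[OF r])
  then have gs2: "(\<lambda>l. pg * ?g l) sums (pg * (1 / \<rho> i))" by (rule sums_mult)
  have g0: "0 \<le> pg * ?g l" for l using r pg by simp
  have hdm[measurable]: "hop_delay S N t i \<in> measurable M (count_space UNIV)" by (rule hd_M) (use i in auto)
  have hgm[measurable]: "hop_gen G S N t i \<in> measurable M (count_space UNIV)" by (rule hg_M[OF i])
  have hgb: "(\<lambda>w. ennreal (real (hop_gen G S N t i w))) \<in> borel_measurable M"
    using measurable_compose[OF hgm, of "\<lambda>n. ennreal (real n)" borel] by simp
  have le: "hop_gen G S N t i w \<le> hop_delay S N t i w" for w
  proof -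
    have "hop_gen G S N t i w \<le> card {1..hop_delay S N t i w}"
      unfolding hop_gen_def by (rule card_mono) auto
    then show ?thesis by simp
  qed
  have "(\<integral>\<^sup>+w. ennreal (real (hop_gen G S N t i w)) \<partial>M)
      = (\<Sum>l. \<integral>\<^sup>+w. ennreal (real (hop_gen G S N t i w)) * indicator {w \<in> space M. hop_delay S N t i w = l} w \<partial>M)"
    by (rule nn_split[OF hdm hgb])
  also have "\<dots> = (\<Sum>l. ennreal (pg * ?g l))"
  proof (rule suminf_cong)
    fix l
    have "(\<integral>\<^sup>+w. ennreal (real (hop_gen G S N t i w)) * indicator {w \<in> space M. hop_delay S N t i w = l} w \<partial>M)
        = (\<integral>\<^sup>+w. (\<Sum>k\<le>l. ennreal (real k) * indicator {w \<in> space M. hop_delay S N t i w = l \<and> hop_gen G S N t i w = k} w) \<partial>M)"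
    proof (rule nn_integral_cong)
      fix w assume w: "w \<in> space M"
      show "ennreal (real (hop_gen G S N t i w)) * indicator {w \<in> space M. hop_delay S N t i w = l} w
          = (\<Sum>k\<le>l. ennreal (real k) * indicator {w \<in> space M. hop_delay S N t i w = l \<and> hop_gen G S N t i w = k} w)"
      proof (cases "hop_delay S N t i w = l")
        case True
        have "(\<Sum>k\<le>l. ennreal (real k) * indicator {w \<in> space M. hop_delay S N t i w = l \<and> hop_gen G S N t i w = k} w)
            = (\<Sum>k\<le>l. if k = hop_gen G S N t i w then ennreal (real k) else 0)"
          using w True by (intro sum.cong refl) (auto simp: indicator_def)
        also have "\<dots> = ennreal (real (hop_gen G S N t i w))"
          using le[of w] True by (simp add: sum.delta')
        finally show ?thesis using w True by simp
      next
        case False then show ?thesis using w by (simp add: indicator_def)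
      qed
    qed
    also have "\<dots> = (\<Sum>k\<le>l. \<integral>\<^sup>+w. ennreal (real k) * indicator {w \<in> space M. hop_delay S N t i w = l \<and> hop_gen G S N t i w = k} w \<partial>M)"
      by (rule nn_integral_sum) measurable
    also have "\<dots> = (\<Sum>k\<le>l. ennreal (real k * (real (l choose k) * pg ^ k * (1 - pg) ^ (l - k) * ?geo l)))"
    proof (rule sum.cong[OF refl])
      fix k
      have "prob {w \<in> space M. hop_delay S N t i w = l \<and> hop_gen G S N t i w = k}
          = real (l choose k) * pg ^ k * (1 - pg) ^ (l - k) * ?geo l"
        using joint[OF i, of t l k] hd_dist[OF i, of t l] by simp
      moreover have "0 \<le> real (l choose k) * pg ^ k * (1 - pg) ^ (l - k) * ?geo l" using pg r by simp
      ultimately show "(\<integral>\<^sup>+w. ennreal (real k) * indicator {w \<in> space M. hop_delay S N t i w = l \<and> hop_gen G S N t i w = k} w \<partial>M)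
          = ennreal (real k * (real (l choose k) * pg ^ k * (1 - pg) ^ (l - k) * ?geo l))"
        by (subst nn_integral_cmult_indicator) (measurable, simp add: emeasure_eq_measure ennreal_mult)
    qed
    also have "\<dots> = ennreal (\<Sum>k\<le>l. real k * (real (l choose k) * pg ^ k * (1 - pg) ^ (l - k) * ?geo l))"
      using pg r by (intro sum_ennreal) simp
    also have "(\<Sum>k\<le>l. real k * (real (l choose k) * pg ^ k * (1 - pg) ^ (l - k) * ?geo l))
        = (\<Sum>k\<le>l. real k * (real (l choose k) * pg ^ k * (1 - pg) ^ (l - k))) * ?geo l"
      by (simp add: sum_distrib_right mult.assoc)
    also have "\<dots> = pg * ?g l" using binom_mean[of l pg] by simp
    finally show "(\<integral>\<^sup>+w. ennreal (real (hop_gen G S N t i w)) * indicator {w \<in> space M. hop_delay S N t i w = l} w \<partial>M)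
        = ennreal (pg * ?g l)" .
  qed
  also have "\<dots> = ennreal (\<Sum>l. pg * ?g l)"
    by (rule suminf_ennreal2[OF g0]) (use gs2 in \<open>simp add: sums_iff\<close>)
  also have "(\<Sum>l. pg * ?g l) = pg / \<rho> i" using gs2 by (simp add: sums_iff)
  finally show ?thesis .
qed

end

context vsetup
begin

lemma int_hd:
  assumes i: "i \<in> {1..N}"
  shows "integrable M (\<lambda>w. real (hop_delay S N t i w)) \<and> integral\<^sup>L M (\<lambda>w. real (hop_delay S N t i w)) = 1 / \<rho> i"
proof -
  have hdm: "hop_delay S N t i \<in> measurable M (count_space UNIV)" by (rule hd_M) (use i in auto)
  have b: "(\<lambda>w. real (hop_delay S N t i w)) \<in> borel_measurable M"
    using measurable_compose[OF hdm, of "\<lambda>n. real n" borel] by simp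
  have r: "0 < \<rho> i" using rho[OF i] by auto
  have nn: "(\<integral>\<^sup>+w. ennreal (real (hop_delay S N t i w)) \<partial>M) = ennreal (1 / \<rho> i)" by (rule hd_nn[OF i])
  have "integrable M (\<lambda>w. real (hop_delay S N t i w))"
    by (rule integrableI_nonneg[OF b]) (auto simp: nn)
  moreover have "integral\<^sup>L M (\<lambda>w. real (hop_delay S N t i w)) = 1 / \<rho> i"
    using integral_eq_nn_integral[OF b] nn r by simp
  ultimately show ?thesis ..
qed

lemma int_hg:
  assumes i: "i \<in> {1..N}"
  shows "integrable M (\<lambda>w. real (hop_gen G S N t i w)) \<and> integral\<^sup>L M (\<lambda>w. real (hop_gen G S N t i w)) = pg / \<rho> i"
proof -
  have hgm: "hop_gen G S N t i \<in> measurable M (count_space UNIV)" by (rule hg_M[OF i])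
  have b: "(\<lambda>w. real (hop_gen G S N t i w)) \<in> borel_measurable M"
    using measurable_compose[OF hgm, of "\<lambda>n. real n" borel] by simp
  have r: "0 < \<rho> i" using rho[OF i] by auto
  have nn: "(\<integral>\<^sup>+w. ennreal (real (hop_gen G S N t i w)) \<partial>M) = ennreal (pg / \<rho> i)" by (rule hg_nn[OF i])
  have "integrable M (\<lambda>w. real (hop_gen G S N t i w))"
    by (rule integrableI_nonneg[OF b]) (auto simp: nn)
  moreover have "integral\<^sup>L M (\<lambda>w. real (hop_gen G S N t i w)) = pg / \<rho> i"
    using integral_eq_nn_integral[OF b] nn r pg by simp
  ultimately show ?thesis ..
qed

lemma indep_hd: "indep_vars (\<lambda>_. count_space UNIV) (\<lambda>i. hop_delay S N t i) {1..N}"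
proof (cases "N = 0")
  case True then show ?thesis by (simp add: indep_vars_def indep_sets_def)
next
  case False
  have sig: "sets (count_space UNIV) = sigma_sets (space (count_space (UNIV :: nat set))) UNIV"
  proof -
    have "sigma_sets (UNIV :: nat set) UNIV = UNIV" by (auto intro: sigma_sets.Basic)
    then show ?thesis by simp
  qed
  have "indep_vars (\<lambda>_. count_space UNIV) (\<lambda>i. hop_delay S N t i) {1..N} \<longleftrightarrow>
    (\<forall>A\<in>(\<Pi> i\<in>{1..N}. UNIV). prob (\<Inter>j\<in>{1..N}. hop_delay S N t j -` A j \<inter> space M)
        = (\<Prod>j\<in>{1..N}. prob (hop_delay S N t j -` A j \<inter> space M)))"
  proof (rule indep_vars_finite)
    show "{1..N} \<noteq> {}" using False by simp
    show "random_variable (count_space UNIV) (hop_delay S N t i)" if "i \<in> {1..N}" for i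
      by (rule hd_M) (use that in auto)
  qed (auto simp: Int_stable_def sig)
  moreover have "prob (\<Inter>j\<in>{1..N}. hop_delay S N t j -` A j \<inter> space M)
        = (\<Prod>j\<in>{1..N}. prob (hop_delay S N t j -` A j \<inter> space M))" for A
  proof -
    have "(\<Inter>j\<in>{1..N}. hop_delay S N t j -` A j \<inter> space M) = {w \<in> space M. \<forall>i\<in>{1..N}. hop_delay S N t i w \<in> A i}"
      using False by auto
    then have "prob (\<Inter>j\<in>{1..N}. hop_delay S N t j -` A j \<inter> space M) = (\<Prod>i\<in>{1..N}. prob {w \<in> space M. link_delay S i 0 w \<in> A i})"
      using Qind[of N t A] by simp
    also have "\<dots> = (\<Prod>j\<in>{1..N}. prob (hop_delay S N t j -` A j \<inter> space M))"
    proof (rule prod.cong[OF refl])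
      fix j assume j: "j \<in> {1..N}"
      have "hop_delay S N t j -` A j \<inter> space M = {w \<in> space M. hop_delay S N t j w \<in> A j}" by auto
      then show "prob {w \<in> space M. link_delay S j 0 w \<in> A j} = prob (hop_delay S N t j -` A j \<inter> space M)"
        using marginal[OF j, of t "A j"] by simp
    qed
    finally show ?thesis .
  qed
  ultimately show ?thesis by blast
qed

end

theorem lemma3:
  fixes M :: "'a measure" and G :: "int \<Rightarrow> 'a \<Rightarrow> bool" and S :: "nat \<Rightarrow> int \<Rightarrow> 'a \<Rightarrow> bool"
    and V :: "nat \<Rightarrow> int \<Rightarrow> 'a \<Rightarrow> int" and N :: nat and t :: int
    and pg :: real and \<rho> :: "nat \<Rightarrow> real"
  assumes "prob_space M"
    and pg: "0 \<le> pg" "pg \<le> 1"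
    and rho: "\<And>i. i \<in> {1..N} \<Longrightarrow> 0 < \<rho> i \<and> \<rho> i \<le> 1"
    and indep: "prob_space.indep_vars M (\<lambda>_. count_space UNIV) (case_sum G (case_prod S))
                  (range Inl \<union> Inr ` ({1..N} \<times> UNIV))"
    and gen: "\<And>s. measure M {w \<in> space M. G s w} = pg"
    and succ: "\<And>i s. i \<in> {1..N} \<Longrightarrow> measure M {w \<in> space M. S i s w} = \<rho> i"
    and source: "\<And>s w. w \<in> space M \<Longrightarrow> V 0 (s + 1) w = V 0 s w + (if G s w then 1 else 0)"
    and relay: "\<And>i s w. i \<in> {1..N} \<Longrightarrow> w \<in> space M \<Longrightarrow>
                  V (Suc i) (s + 1) w = (if S i s w then V i s w else V (Suc i) s w)"
  shows "(AE w in M. vaoi V (N + 1) t w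
            = vaoi V 1 (t - int (tauN S N t w)) w + int (betaN G S N t w))
       \<and> prob_space.indep_vars M (\<lambda>_. count_space UNIV) (\<lambda>i. hop_delay S N t i) {1..N}
       \<and> (\<forall>i\<in>{1..N}. \<forall>l\<ge>1. measure M {w \<in> space M. hop_delay S N t i w = l}
              = (1 - \<rho> i) ^ (l - 1) * \<rho> i)
       \<and> (\<forall>i\<in>{1..N}. \<forall>l k. measure M {w \<in> space M. hop_delay S N t i w = l \<and> hop_gen G S N t i w = k}
              = real (l choose k) * pg ^ k * (1 - pg) ^ (l - k)
                * measure M {w \<in> space M. hop_delay S N t i w = l})
       \<and> integrable M (\<lambda>w. real (tauN S N t w))
       \<and> prob_space.expectation M (\<lambda>w. real (tauN S N t w)) = (\<Sum>i=1..N. 1 / \<rho> i)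
       \<and> integrable M (\<lambda>w. real (betaN G S N t w))
       \<and> prob_space.expectation M (\<lambda>w. real (betaN G S N t w)) = pg * (\<Sum>i=1..N. 1 / \<rho> i)"
proof -
  interpret vsetup M G S N pg \<rho>
  proof -
    interpret prob_space M by fact
    show "vsetup M G S N pg \<rho>"
      by (unfold_locales) (use pg rho indep gen succ in auto)
  qed
  have c1: "AE w in M. vaoi V (N + 1) t w = vaoi V 1 (t - int (tauN S N t w)) w + int (betaN G S N t w)"
  proof -
    have "AE w in M. \<forall>i\<in>{1..N}. \<forall>c::int. \<exists>j\<ge>(1::nat). S i (c - int j) w"
      by (intro AE_ball_countable' AE_all_countable[THEN iffD2] allI AE_good) auto
    then show ?thesis
      using AE_space
    proof eventually_elim
      case (elim w)
      show ?case
        by (rule det) (use elim source relay in auto)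
    qed
  qed
  have c2: "indep_vars (\<lambda>_. count_space UNIV) (\<lambda>i. hop_delay S N t i) {1..N}" by (rule indep_hd)
  have c3: "\<forall>i\<in>{1..N}. \<forall>l\<ge>1. prob {w \<in> space M. hop_delay S N t i w = l} = (1 - \<rho> i) ^ (l - 1) * \<rho> i"
    using hd_dist by auto
  have c4: "\<forall>i\<in>{1..N}. \<forall>l k. prob {w \<in> space M. hop_delay S N t i w = l \<and> hop_gen G S N t i w = k}
              = real (l choose k) * pg ^ k * (1 - pg) ^ (l - k) * prob {w \<in> space M. hop_delay S N t i w = l}"
    using joint by auto
  have tau: "(\<lambda>w. real (tauN S N t w)) = (\<lambda>w. \<Sum>i\<in>{1..N}. real (hop_delay S N t i w))"
    by (simp add: tauN_def)
  have beta: "(\<lambda>w. real (betaN G S N t w)) = (\<lambda>w. \<Sum>i\<in>{1..N}. real (hop_gen G S N t i w))"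
    by (simp add: betaN_def)
  have c5: "integrable M (\<lambda>w. real (tauN S N t w))"
    unfolding tau by (rule Bochner_Integration.integrable_sum) (use int_hd in blast)
  have c6: "integral\<^sup>L M (\<lambda>w. real (tauN S N t w)) = (\<Sum>i=1..N. 1 / \<rho> i)"
    unfolding tau by (subst Bochner_Integration.integral_sum) (use int_hd in auto)
  have c7: "integrable M (\<lambda>w. real (betaN G S N t w))"
    unfolding beta by (rule Bochner_Integration.integrable_sum) (use int_hg in blast)
  have c8: "integral\<^sup>L M (\<lambda>w. real (betaN G S N t w)) = pg * (\<Sum>i=1..N. 1 / \<rho> i)"
    unfolding beta by (subst Bochner_Integration.integral_sum) (use int_hg in \<open>auto simp: sum_distrib_left\<close>)
  show ?thesis using c1 c2 c3 c4 c5 c6 c7 c8 by blast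
qed

end
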